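(* Let $\mathcal T$ be an orbital category. The following are equivalent: (a) $\mathcal T$ is atomic; (b) for every map $f:U\to V$ in $\mathcal T$ and every $X\in\mathbb F_U$, if $\mathrm{Ind}_U^VX\simeq *_V$ then $f$ is an isomorphism and $X\simeq *_U$.
   Context: For a small category $\mathcal T$, $\mathbb F_{\mathcal T}$ is the full subcategory of $\mathrm{Fun}(\mathcal T^{op},\mathrm{Set})$ on finite coproducts of representables. $\mathcal T$ is orbital if $\mathbb F_{\mathcal T}$ has pullbacks, and atomic if every morphism $r:X\to Y$ in $\mathcal T$ admitting a section $s:Y\to X$ with $r\circ s=\mathrm{id}$ is an isomorphism. $\mathbb F_V:=\mathbb F_{\mathcal T,/V}$, $*_V$ is its terminal object, and for $f:U\to V$, $\mathrm{Ind}_U^V:\mathbb F_U\to\mathbb F_V$ is postcomposition with $f$. *)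

theory Defs
  imports Main
begin

record ('o, 'm) cat =
  Ob   :: "'o set"
  Ar   :: "'m set"
  Dom  :: "'m \<Rightarrow> 'o"
  Cod  :: "'m \<Rightarrow> 'o"
  Idt  :: "'o \<Rightarrow> 'm"
  Comp :: "'m \<Rightarrow> 'm \<Rightarrow> 'm"   (* Comp C g f = g \<circ> f *)

definition hom :: "('o, 'm) cat \<Rightarrow> 'o \<Rightarrow> 'o \<Rightarrow> 'm set" where
  "hom C A B = {f \<in> Ar C. Dom C f = A \<and> Cod C f = B}"

definition is_category :: "('o, 'm) cat \<Rightarrow> bool" where
  "is_category C \<longleftrightarrow>
     (\<forall>f \<in> Ar C. Dom C f \<in> Ob C \<and> Cod C f \<in> Ob C) \<and>
     (\<forall>A \<in> Ob C. Idt C A \<in> hom C A A) \<and>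
     (\<forall>A \<in> Ob C. \<forall>B \<in> Ob C. \<forall>C' \<in> Ob C. \<forall>f \<in> hom C A B. \<forall>g \<in> hom C B C'.
        Comp C g f \<in> hom C A C') \<and>
     (\<forall>f \<in> Ar C. Comp C (Idt C (Cod C f)) f = f \<and> Comp C f (Idt C (Dom C f)) = f) \<and>
     (\<forall>f \<in> Ar C. \<forall>g \<in> Ar C. \<forall>h \<in> Ar C. Cod C f = Dom C g \<longrightarrow> Cod C g = Dom C h \<longrightarrow>
        Comp C h (Comp C g f) = Comp C (Comp C h g) f)"

definition is_iso :: "('o, 'm) cat \<Rightarrow> 'm \<Rightarrow> bool" where
  "is_iso C f \<longleftrightarrow> f \<in> Ar C \<and>
     (\<exists>g \<in> hom C (Cod C f) (Dom C f).
        Comp C g f = Idt C (Dom C f) \<and> Comp C f g = Idt C (Cod C f))"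

definition atomic :: "('o, 'm) cat \<Rightarrow> bool" where
  "atomic C \<longleftrightarrow> (\<forall>X \<in> Ob C. \<forall>Y \<in> Ob C. \<forall>r \<in> hom C X Y. \<forall>s \<in> hom C Y X.
      Comp C r s = Idt C Y \<longrightarrow> is_iso C r)"

text \<open>An object of F_T is given by a finite list xs of objects of T; it denotes the
presheaf  B \<mapsto> \<Coprod>_{i < length xs} Hom_T(B, xs!i), whose elements over B are the pairs
(i, g) with g : B \<rightarrow> xs!i, and on which a morphism u : B' \<rightarrow> B acts by precomposition.
Morphisms in F_T are natural transformations between such presheaves (full subcategory
of presheaves), represented extensionally.\<close>

definition fob :: "('o, 'm) cat \<Rightarrow> 'o list \<Rightarrow> bool" where
  "fob C xs \<longleftrightarrow> set xs \<subseteq> Ob C"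

definition psh_el :: "('o, 'm) cat \<Rightarrow> 'o list \<Rightarrow> 'o \<Rightarrow> (nat \<times> 'm) set" where
  "psh_el C xs B = {(i, g). i < length xs \<and> g \<in> hom C B (xs ! i)}"

definition psh_act :: "('o, 'm) cat \<Rightarrow> nat \<times> 'm \<Rightarrow> 'm \<Rightarrow> nat \<times> 'm" where
  "psh_act C x u = (fst x, Comp C (snd x) u)"

type_synonym ('o, 'm) ntrans = "'o \<Rightarrow> nat \<times> 'm \<Rightarrow> nat \<times> 'm"

definition fmor :: "('o, 'm) cat \<Rightarrow> 'o list \<Rightarrow> 'o list \<Rightarrow> ('o, 'm) ntrans \<Rightarrow> bool" where
  "fmor C xs ys \<eta> \<longleftrightarrow>
     (\<forall>B \<in> Ob C. \<forall>x \<in> psh_el C xs B. \<eta> B x \<in> psh_el C ys B) \<and>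
     (\<forall>B \<in> Ob C. \<forall>B' \<in> Ob C. \<forall>u \<in> hom C B' B. \<forall>x \<in> psh_el C xs B.
        \<eta> B' (psh_act C x u) = psh_act C (\<eta> B x) u) \<and>
     (\<forall>B x. (B \<notin> Ob C \<or> x \<notin> psh_el C xs B) \<longrightarrow> \<eta> B x = undefined)"

definition fid :: "('o, 'm) cat \<Rightarrow> 'o list \<Rightarrow> ('o, 'm) ntrans" where
  "fid C xs = (\<lambda>B x. if B \<in> Ob C \<and> x \<in> psh_el C xs B then x else undefined)"

text \<open>fcomp C xs \<theta> \<eta> = \<theta> \<circ> \<eta>, where xs is the source of \<eta>.\<close>
definition fcomp :: "('o, 'm) cat \<Rightarrow> 'o list \<Rightarrow> ('o, 'm) ntrans \<Rightarrow> ('o, 'm) ntrans \<Rightarrow> ('o, 'm) ntrans" where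
  "fcomp C xs \<theta> \<eta> = (\<lambda>B x. if B \<in> Ob C \<and> x \<in> psh_el C xs B then \<theta> B (\<eta> B x) else undefined)"

text \<open>Yoneda image of f : U \<rightarrow> V, a morphism y(U) = [U] \<rightarrow> [V] = y(V).\<close>
definition yon :: "('o, 'm) cat \<Rightarrow> 'o \<Rightarrow> 'm \<Rightarrow> ('o, 'm) ntrans" where
  "yon C U f = (\<lambda>B x. if B \<in> Ob C \<and> x \<in> psh_el C [U] B then (0, Comp C f (snd x)) else undefined)"

definition is_pullback ::
  "('o, 'm) cat \<Rightarrow> 'o list \<Rightarrow> 'o list \<Rightarrow> ('o, 'm) ntrans \<Rightarrow> ('o, 'm) ntrans \<Rightarrow>
   'o list \<Rightarrow> ('o, 'm) ntrans \<Rightarrow> ('o, 'm) ntrans \<Rightarrow> bool" where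
  "is_pullback C X Y f g P p1 p2 \<longleftrightarrow>
     fob C P \<and> fmor C P X p1 \<and> fmor C P Y p2 \<and> fcomp C P f p1 = fcomp C P g p2 \<and>
     (\<forall>Q q1 q2. fob C Q \<and> fmor C Q X q1 \<and> fmor C Q Y q2 \<and> fcomp C Q f q1 = fcomp C Q g q2
        \<longrightarrow> (\<exists>!u. fmor C Q P u \<and> fcomp C Q p1 u = q1 \<and> fcomp C Q p2 u = q2))"

definition orbital :: "('o, 'm) cat \<Rightarrow> bool" where
  "orbital C \<longleftrightarrow> (\<forall>X Y Z f g. fob C X \<and> fob C Y \<and> fob C Z \<and> fmor C X Z f \<and> fmor C Y Z g
      \<longrightarrow> (\<exists>P p1 p2. is_pullback C X Y f g P p1 p2))"

text \<open>Objects of F_V are pairs (X, p) with X in F_T and p : X \<rightarrow> y(V) = [V].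
An isomorphism in the slice is an isomorphism h of F_T commuting with the structure maps.\<close>

definition slice_iso :: "('o, 'm) cat \<Rightarrow> 'o \<Rightarrow> 'o list \<times> ('o, 'm) ntrans \<Rightarrow> 'o list \<times> ('o, 'm) ntrans \<Rightarrow> bool" where
  "slice_iso C V Xp Yq \<longleftrightarrow> (case Xp of (X, p) \<Rightarrow> case Yq of (Y, q) \<Rightarrow>
     (\<exists>h h'. fmor C X Y h \<and> fmor C Y X h' \<and>
        fcomp C X h' h = fid C X \<and> fcomp C Y h h' = fid C Y \<and> fcomp C X q h = p))"

definition term_obj :: "('o, 'm) cat \<Rightarrow> 'o \<Rightarrow> 'o list \<times> ('o, 'm) ntrans" where
  "term_obj C V = ([V], fid C [V])"

definition Ind :: "('o, 'm) cat \<Rightarrow> 'o \<Rightarrow> 'm \<Rightarrow> 'o list \<times> ('o, 'm) ntrans \<Rightarrow> 'o list \<times> ('o, 'm) ntrans" where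
  "Ind C U f Xp = (case Xp of (X, p) \<Rightarrow> (X, fcomp C X (yon C U f) p))"

end

theory Submission
  imports Defs
begin

lemma psh_el_single: "(x \<in> psh_el C [U] B) = (fst x = 0 \<and> snd x \<in> hom C B U)"
  by (cases x) (auto simp: psh_el_def)

lemma cat_comp_hom:
  assumes "is_category C" "f \<in> hom C A B" "g \<in> hom C B D"
  shows "Comp C g f \<in> hom C A D"
proof -
  have "A \<in> Ob C" "B \<in> Ob C" "D \<in> Ob C" using assms unfolding is_category_def hom_def by auto
  thus ?thesis using assms unfolding is_category_def by blast
qed

lemma cat_assoc:
  assumes "is_category C" "f \<in> hom C A B" "g \<in> hom C B D" "h \<in> hom C D E"
  shows "Comp C h (Comp C g f) = Comp C (Comp C h g) f"
  using assms unfolding is_category_def hom_def by auto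

lemma cat_id_hom:
  assumes "is_category C" "A \<in> Ob C" shows "Idt C A \<in> hom C A A"
  using assms unfolding is_category_def by auto

lemma cat_id_left:
  assumes "is_category C" "f \<in> hom C A B" shows "Comp C (Idt C B) f = f"
  using assms unfolding is_category_def hom_def by auto

lemma cat_id_right:
  assumes "is_category C" "f \<in> hom C A B" shows "Comp C f (Idt C A) = f"
  using assms unfolding is_category_def hom_def by auto

lemma hom_ob:
  assumes "is_category C" "f \<in> hom C A B" shows "A \<in> Ob C" "B \<in> Ob C"
  using assms unfolding is_category_def hom_def by auto

lemma fmor_fid: assumes "is_category C" shows "fmor C xs xs (fid C xs)"
  unfolding fmor_def
proof (intro conjI ballI allI impI)
  fix B B' u x assume a: "B \<in> Ob C" "B' \<in> Ob C" "u \<in> hom C B' B" "x \<in> psh_el C xs B"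
  have "psh_act C x u \<in> psh_el C xs B'"
    using a cat_comp_hom[OF assms a(3)] by (auto simp: psh_act_def psh_el_def)
  thus "fid C xs B' (psh_act C x u) = psh_act C (fid C xs B x) u" using a by (simp add: fid_def)
qed (auto simp: fid_def)

lemma fcomp_fid_fid: "fcomp C xs (fid C xs) (fid C xs) = fid C xs"
  unfolding fcomp_def fid_def by (auto intro!: ext)

lemma yon_fmor:
  assumes "is_category C" "f \<in> hom C U V"
  shows "fmor C [U] [V] (yon C U f)"
  unfolding fmor_def
proof (intro conjI ballI allI impI)
  fix B x assume "B \<in> Ob C" "x \<in> psh_el C [U] B"
  thus "yon C U f B x \<in> psh_el C [V] B"
    using assms cat_comp_hom by (auto simp: yon_def psh_el_single)
next
  fix B B' u x assume a: "B \<in> Ob C" "B' \<in> Ob C" "u \<in> hom C B' B" "x \<in> psh_el C [U] B"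
  have "psh_act C x u \<in> psh_el C [U] B'"
    using a assms cat_comp_hom by (auto simp: psh_act_def psh_el_single)
  thus "yon C U f B' (psh_act C x u) = psh_act C (yon C U f B x) u"
    using a assms cat_assoc[OF assms(1) a(3) _ assms(2)]
    by (auto simp: yon_def psh_act_def psh_el_single)
next
  fix B x assume "B \<notin> Ob C \<or> x \<notin> psh_el C [U] B"
  thus "yon C U f B x = undefined" by (auto simp: yon_def)
qed

theorem mainTheorem4:
  fixes T :: "('o, 'm) cat"
  assumes "is_category T" and "orbital T"
  shows "atomic T \<longleftrightarrow>
    (\<forall>U \<in> Ob T. \<forall>V \<in> Ob T. \<forall>f \<in> hom T U V. \<forall>X p.
       fob T X \<and> fmor T X [U] p \<and> slice_iso T V (Ind T U f (X, p)) (term_obj T V)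
       \<longrightarrow> is_iso T f \<and> slice_iso T U (X, p) (term_obj T U))"
proof
  assume at: "atomic T"
  show "\<forall>U \<in> Ob T. \<forall>V \<in> Ob T. \<forall>f \<in> hom T U V. \<forall>X p.
       fob T X \<and> fmor T X [U] p \<and> slice_iso T V (Ind T U f (X, p)) (term_obj T V)
       \<longrightarrow> is_iso T f \<and> slice_iso T U (X, p) (term_obj T U)"
  proof (intro ballI allI impI, elim conjE)
    fix U V f X p
    assume U: "U \<in> Ob T" and V: "V \<in> Ob T" and f: "f \<in> hom T U V"
      and X: "fob T X" and p: "fmor T X [U] p"
      and si: "slice_iso T V (Ind T U f (X, p)) (term_obj T V)"
    obtain h h' where h: "fmor T X [V] h" and h': "fmor T [V] X h'"
      and hh: "fcomp T X h' h = fid T X" and hh': "fcomp T [V] h h' = fid T [V]"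
      and hp: "fcomp T X (fid T [V]) h = fcomp T X (yon T U f) p"
      using si unfolding slice_iso_def Ind_def term_obj_def by auto
    have p_el: "p B x \<in> psh_el T [U] B" if "B \<in> Ob T" "x \<in> psh_el T X B" for B x
      using p that unfolding fmor_def by blast
    have h'_el: "h' B y \<in> psh_el T X B" if "B \<in> Ob T" "y \<in> psh_el T [V] B" for B y
      using h' that unfolding fmor_def by blast
    have h_el: "h B x \<in> psh_el T [V] B" if "B \<in> Ob T" "x \<in> psh_el T X B" for B x
      using h that unfolding fmor_def by blast
    have hh_el: "h' B (h B x) = x" if "B \<in> Ob T" "x \<in> psh_el T X B" for B x
      using fun_cong[OF fun_cong[OF hh, of B], of x] that by (simp add: fcomp_def fid_def)
    have hh'_el: "h B (h' B y) = y" if "B \<in> Ob T" "y \<in> psh_el T [V] B" for B y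
      using fun_cong[OF fun_cong[OF hh', of B], of y] that by (simp add: fcomp_def fid_def)
    have h_eq: "h B x = (0, Comp T f (snd (p B x)))" if "B \<in> Ob T" "x \<in> psh_el T X B" for B x
      using fun_cong[OF fun_cong[OF hp, of B], of x] that h_el[OF that] p_el[OF that]
      by (simp add: fcomp_def fid_def yon_def)
    define y0 where "y0 = ((0::nat), Idt T V)"
    have y0: "y0 \<in> psh_el T [V] V" using cat_id_hom[OF assms(1) V] by (simp add: y0_def psh_el_single)
    define s where "s = snd (p V (h' V y0))"
    have s: "s \<in> hom T V U" using p_el[OF V h'_el[OF V y0]] by (simp add: s_def psh_el_single)
    have "y0 = (0, Comp T f s)" using hh'_el[OF V y0] h_eq[OF V h'_el[OF V y0]] by (simp add: s_def)
    hence fs: "Comp T f s = Idt T V" by (simp add: y0_def)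
    have isof: "is_iso T f" using at U V f s fs unfolding atomic_def by blast
    then obtain g where g: "g \<in> hom T V U" and gf: "Comp T g f = Idt T U"
      unfolding is_iso_def using f by (auto simp: hom_def)
    have fmono: "u = u'" if "u \<in> hom T B U" "u' \<in> hom T B U" "Comp T f u = Comp T f u'" for B u u'
    proof -
      have "Comp T g (Comp T f u) = Comp T g (Comp T f u')" using that by simp
      thus ?thesis using cat_assoc[OF assms(1) that(1) f g] cat_assoc[OF assms(1) that(2) f g]
          gf cat_id_left[OF assms(1) that(1)] cat_id_left[OF assms(1) that(2)] by simp
    qed
    define q where "q = (\<lambda>B y. if B \<in> Ob T \<and> y \<in> psh_el T [U] B then h' B (0, Comp T f (snd y)) else undefined)"
    have fu_el: "((0::nat), Comp T f (snd y)) \<in> psh_el T [V] B" if "y \<in> psh_el T [U] B" for B y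
      using that cat_comp_hom[OF assms(1) _ f] by (simp add: psh_el_single)
    have q: "fmor T [U] X q"
      unfolding fmor_def
    proof (intro conjI ballI allI impI)
      fix B y assume "B \<in> Ob T" "y \<in> psh_el T [U] B"
      thus "q B y \<in> psh_el T X B" using h'_el fu_el by (simp add: q_def)
    next
      fix B B' u y assume a: "B \<in> Ob T" "B' \<in> Ob T" "u \<in> hom T B' B" "y \<in> psh_el T [U] B"
      have ya: "psh_act T y u \<in> psh_el T [U] B'"
        using a cat_comp_hom[OF assms(1)] by (auto simp: psh_act_def psh_el_single)
      have nat: "h' B' (psh_act T z u) = psh_act T (h' B z) u" if "z \<in> psh_el T [V] B" for z
        using h' a that unfolding fmor_def by blast
      have "Comp T f (Comp T (snd y) u) = Comp T (Comp T f (snd y)) u"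
        using cat_assoc[OF assms(1) a(3) _ f] a(4) by (simp add: psh_el_single)
      thus "q B' (psh_act T y u) = psh_act T (q B y) u"
        using a ya nat[OF fu_el[OF a(4)]] by (simp add: q_def psh_act_def)
    next
      fix B x assume "B \<notin> Ob T \<or> x \<notin> psh_el T [U] B"
      thus "q B x = undefined" by (auto simp: q_def)
    qed
    have p_out: "p B x = undefined" if "\<not> (B \<in> Ob T \<and> x \<in> psh_el T X B)" for B x
      using p that unfolding fmor_def by blast
    have qp: "fcomp T X q p = fid T X"
    proof (intro ext)
      fix B x show "fcomp T X q p B x = fid T X B x"
      proof (cases "B \<in> Ob T \<and> x \<in> psh_el T X B")
        case True
        hence "q B (p B x) = x" using p_el[of B x] h_eq[of B x] hh_el[of B x]
          by (simp add: q_def)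
        then show ?thesis using True by (simp add: fcomp_def fid_def)
      next
        case False thus ?thesis unfolding fcomp_def fid_def by auto
      qed
    qed
    have pq: "fcomp T [U] p q = fid T [U]"
    proof (intro ext)
      fix B y show "fcomp T [U] p q B y = fid T [U] B y"
      proof (cases "B \<in> Ob T \<and> y \<in> psh_el T [U] B")
        case True
        hence B: "B \<in> Ob T" and y: "y \<in> psh_el T [U] B" by auto
        define z where "z = ((0::nat), Comp T f (snd y))"
        have z: "z \<in> psh_el T [V] B" using fu_el[OF y] by (simp add: z_def)
        have el: "p B (h' B z) \<in> psh_el T [U] B" using p_el[OF B h'_el[OF B z]] .
        have "(0, Comp T f (snd (p B (h' B z)))) = z"
          using hh'_el[OF B z] h_eq[OF B h'_el[OF B z]] by simp
        hence "Comp T f (snd (p B (h' B z))) = Comp T f (snd y)" by (simp add: z_def)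
        hence "snd (p B (h' B z)) = snd y" using fmono el y by (auto simp: psh_el_single)
        hence "p B (h' B z) = y" using el y by (simp add: psh_el_single prod_eq_iff)
        then show ?thesis using True by (simp add: fcomp_def fid_def q_def z_def)
      next
        case False thus ?thesis unfolding fcomp_def fid_def by auto
      qed
    qed
    have pid: "fcomp T X (fid T [U]) p = p"
    proof (intro ext)
      fix B x show "fcomp T X (fid T [U]) p B x = p B x"
        using p_el[of B x] p_out[of B x] by (auto simp: fcomp_def fid_def)
    qed
    have "slice_iso T U (X, p) (term_obj T U)"
      unfolding slice_iso_def term_obj_def using p q qp pq pid by blast
    thus "is_iso T f \<and> slice_iso T U (X, p) (term_obj T U)" using isof by simp
  qed
next
  assume H: "\<forall>U \<in> Ob T. \<forall>V \<in> Ob T. \<forall>f \<in> hom T U V. \<forall>X p.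
       fob T X \<and> fmor T X [U] p \<and> slice_iso T V (Ind T U f (X, p)) (term_obj T V)
       \<longrightarrow> is_iso T f \<and> slice_iso T U (X, p) (term_obj T U)"
  show "atomic T" unfolding atomic_def
  proof (intro ballI impI)
    fix A B r s assume A: "A \<in> Ob T" and B: "B \<in> Ob T" and r: "r \<in> hom T A B"
      and s: "s \<in> hom T B A" and rs: "Comp T r s = Idt T B"
    have comp: "fcomp T [B] (yon T A r) (yon T B s) = fid T [B]"
    proof (intro ext)
      fix C y show "fcomp T [B] (yon T A r) (yon T B s) C y = fid T [B] C y"
      proof (cases "C \<in> Ob T \<and> y \<in> psh_el T [B] C")
        case True
        hence y: "snd y \<in> hom T C B" "fst y = 0" by (auto simp: psh_el_single)
        have "Comp T r (Comp T s (snd y)) = snd y"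
          using cat_assoc[OF assms(1) y(1) s r] rs cat_id_left[OF assms(1) y(1)] by simp
        moreover have "Comp T s (snd y) \<in> hom T C A" using cat_comp_hom[OF assms(1) y(1) s] .
        ultimately show ?thesis using True y
          by (simp add: fcomp_def fid_def yon_def psh_el_single prod_eq_iff)
      next
        case False thus ?thesis unfolding fcomp_def fid_def by auto
      qed
    qed
    have "fob T [B]" using B by (simp add: fob_def)
    moreover have "fmor T [B] [A] (yon T B s)" using yon_fmor[OF assms(1) s] .
    moreover have "slice_iso T B (Ind T A r ([B], yon T B s)) (term_obj T B)"
      unfolding slice_iso_def Ind_def term_obj_def comp prod.case
      using fmor_fid[OF assms(1)] fcomp_fid_fid by blast
    ultimately show "is_iso T r" using H A B r by blast
  qed
qed

end
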